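(* Let $n\ge 2$. For $k\ge0$ let $\mathcal R^{(N,k)}(x)=\mathcal R^{(N+k-1)}(x)\cdots\mathcal R^{(N)}(x)$ (with $\mathcal R^{(N,0)}=\mathrm{Id}$) and define the multilinear forms $\tilde Q^{(N)}_{k,n}(M_1,\dots,M_n)=Q_{0,n}\big(\mathcal R^{(N,k)}(x_1)M_1\mathcal R^{(N,k)}(x_1)^{-1},\dots,\mathcal R^{(N,k)}(x_n)M_n\mathcal R^{(N,k)}(x_n)^{-1}\big)$, so that $W_n^{(N+k)}(x_1.E_1,\dots,x_n.E_n)=\tilde Q^{(N)}_{k,n}(M^{(N)}(x_1.E_1),\dots,M^{(N)}(x_n.E_n))$. Then there exist polynomials $\tilde\alpha^{(N)}_{k,n}(x_1,\dots,x_n)\in\mathbb C[x_1,\dots,x_n]$, $k=0,\dots,(\dim\mathfrak g)^n$, not all zero and independent of $E_1,\dots,E_n$, with $\sum_k\tilde\alpha^{(N)}_{k,n}\tilde Q^{(N)}_{k,n}=0$, such that for all $E_1,\dots,E_n\in\mathfrak g$ $$\sum_{k=0}^{(\dim\mathfrak g)^n}\tilde\alpha^{(N)}_{k,n}(x_1,\dots,x_n)W_n^{(N+k)}(x_1.E_1,\dots,x_n.E_n)=0 .$$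
   Context: Let $G\subset GL(r,\mathbb C)$ be a complex reductive Lie group given in a faithful matrix representation, with Lie algebra $\mathfrak g\subset\mathfrak{gl}(r,\mathbb C)$; ${\rm Tr}$ is the matrix trace. For each integer $N$ let $\mathcal D^{(N)}(x)\in\mathfrak g$ be rational in $x$, $\Psi^{(N)}(x)$ an invertible $G$-valued solution of $\frac{d}{dx}\Psi^{(N)}=\mathcal D^{(N)}\Psi^{(N)}$, and $\Psi^{(N+1)}=\mathcal R^{(N)}(x)\Psi^{(N)}$ with $\mathcal R^{(N)}(x)$ invertible, rational in $x$ with rational inverse. For $E\in\mathfrak g$, $M^{(N)}(x.E)=\Psi^{(N)}(x)E\Psi^{(N)}(x)^{-1}$. $Q_{0,n}$ is the multilinear form $Q_{0,n}(M_1,\dots,M_n)=\sum_\sigma(-1)^\sigma\frac{{\rm Tr}\prod_{i=1}^nM_{\sigma^i(1)}}{\prod_{i=1}^n(x_i-x_{\sigma(i)})}$ (sum over permutations of $\{1,\dots,n\}$ that are a single $n$-cycle, $(-1)^\sigma$ the sign, product ordered with $i$ increasing), and $W_n^{(N)}(x_1.E_1,\dots,x_n.E_n)=Q_{0,n}(M^{(N)}(x_1.E_1),\dots,M^{(N)}(x_n.E_n))$ for pairwise distinct $x_i$ (for $n=2$ this equals ${\rm Tr}\,M^{(N)}(x_1.E_1)M^{(N)}(x_2.E_2)/(x_1-x_2)^2$). *)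

theory Defs
  imports "HOL-Analysis.Analysis" "HOL-Combinatorics.Permutations"
          "HOL-Computational_Algebra.Polynomial"
begin

type_synonym 'r cmat = "complex^'r^'r"

definition cscale :: "complex \<Rightarrow> 'r::finite cmat \<Rightarrow> 'r cmat" where
  "cscale c A = (\<chi> i j. c * A $ i $ j)"

definition csubspace :: "'r::finite cmat set \<Rightarrow> bool" where
  "csubspace V \<longleftrightarrow> 0 \<in> V \<and> (\<forall>A\<in>V. \<forall>B\<in>V. A + B \<in> V) \<and> (\<forall>c. \<forall>A\<in>V. cscale c A \<in> V)"

definition cdim :: "'r::finite cmat set \<Rightarrow> nat" where
  "cdim V = vector_space.dim cscale V"

definition bracket :: "'r::finite cmat \<Rightarrow> 'r cmat \<Rightarrow> 'r cmat" where
  "bracket A B = A ** B - B ** A"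

definition lie_subalgebra :: "'r::finite cmat set \<Rightarrow> bool" where
  "lie_subalgebra g \<longleftrightarrow> csubspace g \<and> (\<forall>A\<in>g. \<forall>B\<in>g. bracket A B \<in> g)"

text \<open>Reductive Lie algebra: the adjoint representation is completely reducible,
  i.e. every ideal (ad-invariant subspace) has an ad-invariant complement.\<close>
definition ad_invariant :: "'r::finite cmat set \<Rightarrow> 'r cmat set \<Rightarrow> bool" where
  "ad_invariant g V \<longleftrightarrow> csubspace V \<and> V \<subseteq> g \<and> (\<forall>A\<in>g. \<forall>B\<in>V. bracket A B \<in> V)"

definition reductive_lie_algebra :: "'r::finite cmat set \<Rightarrow> bool" where
  "reductive_lie_algebra g \<longleftrightarrow> lie_subalgebra g \<and>
     (\<forall>V. ad_invariant g V \<longrightarrow> (\<exists>W. ad_invariant g W \<and> V \<inter> W = {0} \<and>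
          (\<forall>A\<in>g. \<exists>B\<in>V. \<exists>C\<in>W. A = B + C)))"

text \<open>Rational (matrix-valued) functions of one complex variable; values at the
  finitely many poles are irrelevant.\<close>
definition rational_fun :: "(complex \<Rightarrow> complex) \<Rightarrow> bool" where
  "rational_fun f \<longleftrightarrow> (\<exists>p q. q \<noteq> 0 \<and> (\<forall>x. poly q x \<noteq> 0 \<longrightarrow> f x = poly p x / poly q x))"

definition rational_mat :: "(complex \<Rightarrow> 'r::finite cmat) \<Rightarrow> bool" where
  "rational_mat F \<longleftrightarrow> (\<forall>i j. rational_fun (\<lambda>x. F x $ i $ j))"

text \<open>Polynomial functions in the variables x_0,...,x_(n-1) (= C[x_1,...,x_n]).\<close>
inductive_set polyfun :: "nat \<Rightarrow> ((nat \<Rightarrow> complex) \<Rightarrow> complex) set" for n :: nat where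
  pconst: "(\<lambda>x. c) \<in> polyfun n"
| pvar: "i < n \<Longrightarrow> (\<lambda>x. x i) \<in> polyfun n"
| padd: "p \<in> polyfun n \<Longrightarrow> q \<in> polyfun n \<Longrightarrow> (\<lambda>x. p x + q x) \<in> polyfun n"
| pmult: "p \<in> polyfun n \<Longrightarrow> q \<in> polyfun n \<Longrightarrow> (\<lambda>x. p x * q x) \<in> polyfun n"

definition mprod_list :: "'r::finite cmat list \<Rightarrow> 'r cmat" where
  "mprod_list As = foldr (\<lambda>A B. A ** B) As (mat 1)"

definition is_ncycle :: "nat \<Rightarrow> (nat \<Rightarrow> nat) \<Rightarrow> bool" where
  "is_ncycle n \<sigma> \<longleftrightarrow> \<sigma> permutes {..<n} \<and> {(\<sigma> ^^ k) 0 | k. True} = {..<n}"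

text \<open>Q_{0,n}, with indices shifted to 0,...,n-1.\<close>
definition Q0 :: "nat \<Rightarrow> (nat \<Rightarrow> complex) \<Rightarrow> (nat \<Rightarrow> 'r::finite cmat) \<Rightarrow> complex" where
  "Q0 n x M = (\<Sum>\<sigma>\<in>{\<sigma>. is_ncycle n \<sigma>}.
      of_int (sign \<sigma>) * trace (mprod_list (map (\<lambda>i. M ((\<sigma> ^^ i) 0)) [1..<n+1]))
      / (\<Prod>i<n. (x i - x (\<sigma> i))))"

fun Rprod :: "(int \<Rightarrow> complex \<Rightarrow> 'r::finite cmat) \<Rightarrow> int \<Rightarrow> nat \<Rightarrow> complex \<Rightarrow> 'r cmat" where
  "Rprod R N 0 x = mat 1"
| "Rprod R N (Suc k) x = R (N + int k) x ** Rprod R N k x"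

definition Qtilde :: "(int \<Rightarrow> complex \<Rightarrow> 'r::finite cmat) \<Rightarrow> int \<Rightarrow> nat \<Rightarrow> nat
    \<Rightarrow> (nat \<Rightarrow> complex) \<Rightarrow> (nat \<Rightarrow> 'r cmat) \<Rightarrow> complex" where
  "Qtilde R N k n x M = Q0 n x (\<lambda>i. Rprod R N k (x i) ** M i ** matrix_inv (Rprod R N k (x i)))"

definition Mfun :: "(int \<Rightarrow> complex \<Rightarrow> 'r::finite cmat) \<Rightarrow> int \<Rightarrow> complex \<Rightarrow> 'r cmat \<Rightarrow> 'r cmat" where
  "Mfun \<Psi> N x E = \<Psi> N x ** E ** matrix_inv (\<Psi> N x)"

definition Wn :: "(int \<Rightarrow> complex \<Rightarrow> 'r::finite cmat) \<Rightarrow> int \<Rightarrow> nat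
    \<Rightarrow> (nat \<Rightarrow> complex) \<Rightarrow> (nat \<Rightarrow> 'r cmat) \<Rightarrow> complex" where
  "Wn \<Psi> N n x E = Q0 n x (\<lambda>i. Mfun \<Psi> N (x i) (E i))"

end

theory Submission
  imports Defs
begin


lemma polyfun_line:
  assumes "p \<in> polyfun n"
  shows "\<exists>P. \<forall>t. p (\<lambda>i. a i + t * (c i - a i)) = poly P t"
  using assms
proof induction
  case (pconst c) then show ?case by (intro exI[of _ "[:c:]"]) simp
next
  case (pvar i) then show ?case by (intro exI[of _ "[:a i, c i - a i:]"]) (simp add: algebra_simps)
next
  case (padd p q)
  then obtain P Q where "\<forall>t. p (\<lambda>i. a i + t * (c i - a i)) = poly P t" "\<forall>t. q (\<lambda>i. a i + t * (c i - a i)) = poly Q t" by blast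
  then show ?case by (intro exI[of _ "P + Q"]) simp
next
  case (pmult p q)
  then obtain P Q where "\<forall>t. p (\<lambda>i. a i + t * (c i - a i)) = poly P t" "\<forall>t. q (\<lambda>i. a i + t * (c i - a i)) = poly Q t" by blast
  then show ?case by (intro exI[of _ "P * Q"]) simp
qed

lemma polyfun_domain:
  assumes p: "p \<in> polyfun n" and q: "q \<in> polyfun n" and pa: "p a \<noteq> 0" and qc: "q c \<noteq> 0"
  shows "\<exists>x. p x * q x \<noteq> 0"
proof (rule ccontr)
  assume H: "\<not> (\<exists>x. p x * q x \<noteq> 0)"
  obtain P where P: "\<forall>t. p (\<lambda>i. a i + t * (c i - a i)) = poly P t" using polyfun_line[OF p] by blast
  obtain Q where Q: "\<forall>t. q (\<lambda>i. a i + t * (c i - a i)) = poly Q t" using polyfun_line[OF q] by blast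
  have "poly (P * Q) t = 0" for t using H P Q by (metis poly_mult)
  then have "P * Q = 0" using poly_all_0_iff_0 by blast
  then have "P = 0 \<or> Q = 0" by simp
  moreover have "poly P 0 = p a" using P[rule_format, of 0] by simp
  moreover have "poly Q 1 = q c" using Q[rule_format, of 1] by simp
  ultimately show False using pa qc by auto
qed

lemma polyfun_neg: "p \<in> polyfun n \<Longrightarrow> (\<lambda>x. - p x) \<in> polyfun n"
  using polyfun.pmult[OF polyfun.pconst[of "-1"], of p] by simp

lemma polyfun_sum: "finite A \<Longrightarrow> (\<And>a. a \<in> A \<Longrightarrow> f a \<in> polyfun n) \<Longrightarrow> (\<lambda>x. \<Sum>a\<in>A. f a x) \<in> polyfun n"
proof (induction A rule: finite_induct)
  case empty then show ?case using polyfun.pconst[of 0] by simp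
next
  case (insert a A) then show ?case using polyfun.padd[of "f a" n "\<lambda>x. \<Sum>a\<in>A. f a x"] by simp
qed

lemma polyfun_prod: "finite A \<Longrightarrow> (\<And>a. a \<in> A \<Longrightarrow> f a \<in> polyfun n) \<Longrightarrow> (\<lambda>x. \<Prod>a\<in>A. f a x) \<in> polyfun n"
proof (induction A rule: finite_induct)
  case empty then show ?case using polyfun.pconst[of 1] by simp
next
  case (insert a A) then show ?case using polyfun.pmult[of "f a" n "\<lambda>x. \<Prod>a\<in>A. f a x"] by simp
qed

lemma elim_lemma:
  assumes "finite I"
  shows "finite J \<Longrightarrow> card I < card J \<Longrightarrow> (\<forall>i\<in>I. \<forall>j\<in>J. A i j \<in> polyfun n) \<Longrightarrow>
    \<exists>\<alpha>. (\<forall>j\<in>J. \<alpha> j \<in> polyfun n) \<and> (\<exists>j\<in>J. \<exists>x. \<alpha> j x \<noteq> 0) \<and>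
        (\<forall>i\<in>I. \<forall>x. (\<Sum>j\<in>J. A i j x * \<alpha> j x) = 0)"
  using assms
proof (induction I arbitrary: J A rule: finite_induct)
  case empty
  then obtain j0 where j0: "j0 \<in> J" by (metis card_gt_0_iff card.empty ex_in_conv)
  show ?case
    proof (rule exI[of _ "\<lambda>j x. if j = j0 then 1 else 0"], intro conjI)
    show "\<forall>j\<in>J. (\<lambda>x. if j = j0 then 1 else 0) \<in> polyfun n" using polyfun.pconst by simp
    show "\<exists>j\<in>J. \<exists>x. (if j = j0 then 1 else 0::complex) \<noteq> 0" using j0 by auto
  qed simp
next
  case (insert i0 I)
  show ?case
  proof (cases "\<forall>j\<in>J. \<forall>x. A i0 j x = 0")
    case True
    have "card (insert i0 I) = Suc (card I)" using insert.hyps by simp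
    then have cIJ: "card I < card J" using insert.prems(2) by linarith
    obtain \<alpha> where a: "(\<forall>j\<in>J. \<alpha> j \<in> polyfun n) \<and> (\<exists>j\<in>J. \<exists>x. \<alpha> j x \<noteq> 0) \<and>
        (\<forall>i\<in>I. \<forall>x. (\<Sum>j\<in>J. A i j x * \<alpha> j x) = 0)"
      using insert.IH[OF insert.prems(1) cIJ, of A] insert.prems(3) by auto
    show ?thesis by (rule exI[of _ \<alpha>]) (use a True in auto)
  next
    case False
    then obtain j0 x0 where j0: "j0 \<in> J" and x0: "A i0 j0 x0 \<noteq> 0" by blast
    define a where "a = A i0 j0"
    define J' where "J' = J - {j0}"
    define B where "B i j = (\<lambda>x. a x * A i j x - A i j0 x * A i0 j x)" for i j
    have fJ': "finite J'" using insert.prems J'_def by simp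
    have cJ': "card I < card J'" proof -
      have "card (insert i0 I) = Suc (card I)" using insert.hyps by simp
      moreover have "card J' = card J - 1" unfolding J'_def using j0 by (simp add: card_Diff_singleton)
      ultimately show ?thesis using insert.prems(2) by linarith
    qed
    have apoly: "a \<in> polyfun n" using insert.prems j0 a_def by simp
    have Bp: "\<forall>i\<in>I. \<forall>j\<in>J'. B i j \<in> polyfun n"
    proof (intro ballI)
      fix i j assume i: "i \<in> I" and j: "j \<in> J'"
      have "(\<lambda>x. a x * A i j x) \<in> polyfun n" using insert.prems i j J'_def apoly by (auto intro: polyfun.pmult)
      moreover have "(\<lambda>x. - (A i j0 x * A i0 j x)) \<in> polyfun n"
        using insert.prems i j J'_def j0 by (auto intro!: polyfun_neg polyfun.pmult)
      ultimately show "B i j \<in> polyfun n" unfolding B_def using polyfun.padd by fastforce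
    qed
    obtain \<beta> where b1: "\<forall>j\<in>J'. \<beta> j \<in> polyfun n" and b2: "\<exists>j\<in>J'. \<exists>x. \<beta> j x \<noteq> 0"
      and b3: "\<forall>i\<in>I. \<forall>x. (\<Sum>j\<in>J'. B i j x * \<beta> j x) = 0"
      using insert.IH[OF fJ' cJ' Bp] by blast
    define \<alpha> where "\<alpha> j = (if j = j0 then (\<lambda>x. - (\<Sum>l\<in>J'. A i0 l x * \<beta> l x)) else (\<lambda>x. a x * \<beta> j x))" for j
    have sumJ: "(\<Sum>j\<in>J. f j) = f j0 + (\<Sum>j\<in>J'. f j)" for f :: "_ \<Rightarrow> complex"
      unfolding J'_def using insert.prems j0 by (simp add: sum.remove)
    have aJ': "\<alpha> j = (\<lambda>x. a x * \<beta> j x)" if "j \<in> J'" for j using that unfolding \<alpha>_def J'_def by auto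
    show ?thesis
    proof (intro exI[of _ \<alpha>] conjI)
      show "\<forall>j\<in>J. \<alpha> j \<in> polyfun n"
      proof
        fix j assume j: "j \<in> J"
        show "\<alpha> j \<in> polyfun n"
        proof (cases "j = j0")
          case True
          have "(\<lambda>x. \<Sum>l\<in>J'. A i0 l x * \<beta> l x) \<in> polyfun n"
            using fJ' b1 insert.prems J'_def by (intro polyfun_sum) (auto intro: polyfun.pmult)
          then show ?thesis using True \<alpha>_def polyfun_neg by simp
        next
          case False
          then show ?thesis using j b1 apoly unfolding \<alpha>_def J'_def by (auto intro: polyfun.pmult)
        qed
      qed
    next
      obtain j1 x1 where j1: "j1 \<in> J'" and x1: "\<beta> j1 x1 \<noteq> 0" using b2 by blast
      obtain y where "a y * \<beta> j1 y \<noteq> 0"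
        using polyfun_domain[OF apoly b1[rule_format, OF j1], of x0 x1] x0 x1 a_def by blast
      then have "\<alpha> j1 y \<noteq> 0" using aJ'[OF j1] by simp
      moreover have "j1 \<in> J" using j1 J'_def by simp
      ultimately show "\<exists>j\<in>J. \<exists>x. \<alpha> j x \<noteq> 0" by blast
    next
      show "\<forall>i\<in>insert i0 I. \<forall>x. (\<Sum>j\<in>J. A i j x * \<alpha> j x) = 0"
      proof (intro ballI allI)
        fix i x assume i: "i \<in> insert i0 I"
        have e0: "(\<Sum>j\<in>J. A i j x * \<alpha> j x) = A i j0 x * (- (\<Sum>l\<in>J'. A i0 l x * \<beta> l x)) + (\<Sum>j\<in>J'. A i j x * (a x * \<beta> j x))"
        proof -
          have "(\<Sum>j\<in>J'. A i j x * \<alpha> j x) = (\<Sum>j\<in>J'. A i j x * (a x * \<beta> j x))"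
            by (rule sum.cong) (simp_all add: aJ')
          moreover have "\<alpha> j0 x = - (\<Sum>l\<in>J'. A i0 l x * \<beta> l x)" by (simp add: \<alpha>_def)
          ultimately show ?thesis unfolding sumJ by simp
        qed
        have e1: "A i j0 x * (\<Sum>l\<in>J'. A i0 l x * \<beta> l x) = (\<Sum>l\<in>J'. A i j0 x * A i0 l x * \<beta> l x)"
          by (simp add: sum_distrib_left mult.assoc)
        have e2: "(\<Sum>j\<in>J'. A i j x * (a x * \<beta> j x)) = (\<Sum>j\<in>J'. a x * A i j x * \<beta> j x)"
          by (rule sum.cong) (simp_all add: mult.commute mult.left_commute)
        have e3: "(\<Sum>j\<in>J'. (a x * A i j x - A i j0 x * A i0 j x) * \<beta> j x) = (\<Sum>j\<in>J'. a x * A i j x * \<beta> j x) - (\<Sum>l\<in>J'. A i j0 x * A i0 l x * \<beta> l x)"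
          by (simp add: left_diff_distrib sum_subtractf)
        have "(\<Sum>j\<in>J. A i j x * \<alpha> j x) = A i j0 x * (- (\<Sum>l\<in>J'. A i0 l x * \<beta> l x)) + (\<Sum>j\<in>J'. A i j x * (a x * \<beta> j x))"
          by (rule e0)
        also have "\<dots> = (\<Sum>j\<in>J'. (a x * A i j x - A i j0 x * A i0 j x) * \<beta> j x)"
          unfolding e3 e2 using e1 by simp
        finally have E: "(\<Sum>j\<in>J. A i j x * \<alpha> j x) = (\<Sum>j\<in>J'. (a x * A i j x - A i j0 x * A i0 j x) * \<beta> j x)" .
        show "(\<Sum>j\<in>J. A i j x * \<alpha> j x) = 0"
        proof (cases "i = i0")
          case True
          then show ?thesis unfolding E by (simp add: a_def)
        next
          case False
          then have "i \<in> I" using i by simp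
          then show ?thesis unfolding E using b3 by (simp add: B_def)
        qed
      qed
    qed
  qed
qed



lemma cscale_mult_left: "cscale c (A::'r::finite cmat) ** X = cscale c (A ** X)"
  by (simp add: cscale_def matrix_matrix_mult_def vec_eq_iff sum_distrib_left mult.assoc)

lemma cscale_mult_right: "X ** cscale c (A::'r::finite cmat) = cscale c (X ** A)"
  by (simp add: cscale_def matrix_matrix_mult_def vec_eq_iff sum_distrib_left algebra_simps)

lemma matrix_add_rdistrib: "((B + C) ** A) = (B ** A) + (C ** A)"
  by (vector matrix_matrix_mult_def sum.distrib[symmetric] field_simps)

lemma sum_mult_left: "finite S \<Longrightarrow> (\<Sum>l\<in>S. F l) ** (X::'r::finite cmat) = (\<Sum>l\<in>S. F l ** X)"
  by (induction S rule: finite_induct) (simp_all add: matrix_add_rdistrib)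

lemma sum_mult_right: "finite S \<Longrightarrow> (X::'r::finite cmat) ** (\<Sum>l\<in>S. F l) = (\<Sum>l\<in>S. X ** F l)"
  by (induction S rule: finite_induct) (simp_all add: matrix_add_ldistrib)

lemma trace_cscale: "trace (cscale c (A::'r::finite cmat)) = c * trace A"
  by (simp add: trace_def cscale_def sum_distrib_left)

lemma trace_sum: "finite S \<Longrightarrow> trace (\<Sum>l\<in>S. F l :: 'r::finite cmat) = (\<Sum>l\<in>S. trace (F l))"
  by (induction S rule: finite_induct) (simp_all add: trace_add, simp add: trace_def)

lemma mprod_cons: "mprod_list (A # As) = A ** mprod_list As"
  by (simp add: mprod_list_def)

lemma mprod_list_lin:
  fixes M :: "nat \<Rightarrow> 'r::finite cmat"
  assumes "finite A"
  shows "distinct L \<Longrightarrow> j \<in> set L \<Longrightarrow>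
    mprod_list (map (M(j := \<Sum>l\<in>A. cscale (c l) (B l))) L) = (\<Sum>l\<in>A. cscale (c l) (mprod_list (map (M(j := B l)) L)))"
proof (induction L)
  case Nil then show ?case by simp
next
  case (Cons a L)
  show ?case
  proof (cases "a = j")
    case True
    then have jL: "j \<notin> set L" using Cons.prems by simp
    have e: "map (M(j := X)) L = map M L" for X using jL by (intro map_cong) auto
    have c: "mprod_list (map (M(j := X)) (a # L)) = X ** mprod_list (map M L)" for X
      by (simp only: list.map mprod_cons e True fun_upd_same)
    show ?thesis unfolding c using assms
      by (simp add: sum_mult_left cscale_mult_left)
  next
    case False
    then have "j \<in> set L" "distinct L" using Cons.prems by auto
    then have IH: "mprod_list (map (M(j := \<Sum>l\<in>A. cscale (c l) (B l))) L) = (\<Sum>l\<in>A. cscale (c l) (mprod_list (map (M(j := B l)) L)))"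
      using Cons.IH by blast
    have "mprod_list (map (M(j := \<Sum>l\<in>A. cscale (c l) (B l))) (a # L)) = M a ** mprod_list (map (M(j := \<Sum>l\<in>A. cscale (c l) (B l))) L)"
      using False by (simp add: mprod_list_def)
    also have "\<dots> = (\<Sum>l\<in>A. cscale (c l) (M a ** mprod_list (map (M(j := B l)) L)))"
      unfolding IH using assms by (simp add: sum_mult_right cscale_mult_right)
    also have "\<dots> = (\<Sum>l\<in>A. cscale (c l) (mprod_list (map (M(j := B l)) (a # L))))"
      using False by (simp add: mprod_list_def)
    finally show ?thesis .
  qed
qed

lemma inj_funpow: "inj (f::'a \<Rightarrow> 'a) \<Longrightarrow> inj (f ^^ k)"
  by (rule inj_fn)

lemma funpow_periodic:
  assumes "(f ^^ p) z = z"
  shows "(f ^^ (q * p + r)) z = (f ^^ r) z"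
proof (induction q)
  case 0 then show ?case by simp
next
  case (Suc q)
  have e: "Suc q * p + r = (q * p + r) + p" by simp
  have "(f ^^ (Suc q * p + r)) z = (f ^^ (q * p + r)) ((f ^^ p) z)"
    by (simp only: e funpow_add o_apply)
  then show ?case using Suc assms by simp
qed

lemma ncycle_list:
  assumes cyc: "is_ncycle n \<sigma>"
  shows "distinct (map (\<lambda>i. (\<sigma> ^^ i) 0) [1..<n+1]) \<and> set (map (\<lambda>i. (\<sigma> ^^ i) 0) [1..<n+1]) = {..<n}"
proof -
  define f where "f k = (\<sigma> ^^ k) 0" for k
  have orb: "{f k | k. True} = {..<n}" using cyc unfolding is_ncycle_def f_def by simp
  have fn: "f k < n" for k using orb by blast
  have injs: "inj \<sigma>" using cyc unfolding is_ncycle_def using permutes_inj by blast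
  have dist: "distinct (map f [1..<n+1])"
  proof (rule ccontr)
    assume "\<not> distinct (map f [1..<n+1])"
    then have "\<not> inj_on f (set [1..<n+1])" by (simp only: distinct_map distinct_upt simp_thms)
    then have "\<not> inj_on f {1..<n+1}" by (metis set_upt)
    then obtain a0 b0 where h: "a0 \<in> {1..<n+1}" "b0 \<in> {1..<n+1}" "f a0 = f b0" "a0 \<noteq> b0"
      unfolding inj_on_def by blast
    define a where "a = min a0 b0"
    define b where "b = max a0 b0"
    have ab: "a < b" "a \<in> {1..<n+1}" "b \<in> {1..<n+1}" "f a = f b"
      using h unfolding a_def b_def by (auto simp: min_def max_def)
    define p where "p = b - a"
    have p0: "0 < p" "p < n" using ab p_def by auto
    have "(\<sigma> ^^ a) ((\<sigma> ^^ p) 0) = (\<sigma> ^^ a) 0"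
    proof -
      have e: "b = a + (b - a)" using ab by simp
      have "(\<sigma> ^^ b) 0 = (\<sigma> ^^ a) ((\<sigma> ^^ (b - a)) 0)" by (subst e, simp only: funpow_add o_apply)
      then show ?thesis using ab unfolding f_def p_def by simp
    qed
    then have fp: "(\<sigma> ^^ p) 0 = 0" using inj_funpow[OF injs, of a] by (simp add: inj_def)
    have fm: "f k = f (k mod p)" for k
      using funpow_periodic[OF fp, of "k div p" "k mod p"] unfolding f_def by simp
    have "f k \<in> f ` {..<p}" for k using fm[of k] p0 by (metis imageI lessThan_iff mod_less_divisor)
    then have "{f k | k. True} \<subseteq> f ` {..<p}" by blast
    then have "{..<n} \<subseteq> f ` {..<p}" using orb by simp
    then have "card {..<n} \<le> card (f ` {..<p})" by (intro card_mono) auto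
    also have "\<dots> \<le> p" using card_image_le[of "{..<p}" f] by simp
    finally show False using p0 by simp
  qed
  have sub: "set (map f [1..<n+1]) \<subseteq> {..<n}" using fn by auto
  have "card (set (map f [1..<n+1])) = n" using distinct_card[OF dist] by simp
  then have "set (map f [1..<n+1]) = {..<n}" using sub by (simp add: card_subset_eq)
  then show ?thesis using dist unfolding f_def by simp
qed

lemma Q0_lin:
  fixes M :: "nat \<Rightarrow> 'r::finite cmat"
  assumes "finite A" "j < n"
  shows "Q0 n x (M(j := \<Sum>l\<in>A. cscale (c l) (B l))) = (\<Sum>l\<in>A. c l * Q0 n x (M(j := B l)))"
proof -
  have "of_int (sign \<sigma>) * trace (mprod_list (map (\<lambda>i. (M(j := \<Sum>l\<in>A. cscale (c l) (B l))) ((\<sigma> ^^ i) 0)) [1..<n+1]))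
      / (\<Prod>i<n. (x i - x (\<sigma> i))) =
      (\<Sum>l\<in>A. c l * (of_int (sign \<sigma>) * trace (mprod_list (map (\<lambda>i. (M(j := B l)) ((\<sigma> ^^ i) 0)) [1..<n+1]))
      / (\<Prod>i<n. (x i - x (\<sigma> i)))))" if s: "is_ncycle n \<sigma>" for \<sigma>
  proof -
    let ?L = "map (\<lambda>i. (\<sigma> ^^ i) 0) [1..<n+1]"
    have d: "distinct ?L" and jL: "j \<in> set ?L" using ncycle_list[OF s] assms by auto
    have m: "map (\<lambda>i. N ((\<sigma> ^^ i) 0)) [1..<n+1] = map N ?L" for N :: "nat \<Rightarrow> 'r cmat" by simp
    show ?thesis unfolding m mprod_list_lin[OF assms(1) d jL]
      using assms(1) by (simp add: trace_sum trace_cscale sum_distrib_left sum_divide_distrib algebra_simps)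
  qed
  note per = this
  define C where "C = {\<sigma>. is_ncycle n \<sigma>}"
  define U where "U \<sigma> l = of_int (sign \<sigma>) * trace (mprod_list (map (\<lambda>i. (M(j := B l)) ((\<sigma> ^^ i) 0)) [1..<n+1]))
      / (\<Prod>i<n. (x i - x (\<sigma> i)))" for \<sigma> l
  have "Q0 n x (M(j := \<Sum>l\<in>A. cscale (c l) (B l))) = (\<Sum>\<sigma>\<in>C. \<Sum>l\<in>A. c l * U \<sigma> l)"
    unfolding Q0_def C_def U_def by (rule sum.cong[OF refl]) (rule per, simp)
  also have "\<dots> = (\<Sum>l\<in>A. \<Sum>\<sigma>\<in>C. c l * U \<sigma> l)" by (rule sum.swap)
  also have "\<dots> = (\<Sum>l\<in>A. c l * Q0 n x (M(j := B l)))"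
    unfolding Q0_def C_def U_def by (simp only: sum_distrib_left)
  finally show ?thesis .
qed

lemma Q0_cong:
  assumes "\<forall>i<n. M i = M' i"
  shows "Q0 n x M = Q0 n x M'"
proof -
  have "map (\<lambda>i. M ((\<sigma> ^^ i) 0)) [1..<n+1] = map (\<lambda>i. M' ((\<sigma> ^^ i) 0)) [1..<n+1]" if "is_ncycle n \<sigma>" for \<sigma>
  proof (rule map_cong[OF refl])
    fix i show "M ((\<sigma> ^^ i) 0) = M' ((\<sigma> ^^ i) 0)"
      using that assms unfolding is_ncycle_def by blast
  qed
  note mm = this
  show ?thesis unfolding Q0_def
  proof (rule sum.cong[OF refl])
    fix \<sigma> assume "\<sigma> \<in> {\<sigma>. is_ncycle n \<sigma>}"
    then have "map (\<lambda>i. M ((\<sigma> ^^ i) 0)) [1..<n+1] = map (\<lambda>i. M' ((\<sigma> ^^ i) 0)) [1..<n+1]"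
      using mm by blast
    then show "of_int (sign \<sigma>) * trace (mprod_list (map (\<lambda>i. M ((\<sigma> ^^ i) 0)) [1..<n+1])) / (\<Prod>i<n. (x i - x (\<sigma> i))) =
      of_int (sign \<sigma>) * trace (mprod_list (map (\<lambda>i. M' ((\<sigma> ^^ i) 0)) [1..<n+1])) / (\<Prod>i<n. (x i - x (\<sigma> i)))"
      by (simp only:)
  qed
qed



definition rf1 :: "complex set \<Rightarrow> (complex \<Rightarrow> complex) \<Rightarrow> bool" where
  "rf1 F f \<longleftrightarrow> (\<exists>p q. \<forall>y. y \<notin> F \<longrightarrow> poly q y \<noteq> 0 \<and> f y = poly p y / poly q y)"

lemma rf1_mono: "rf1 F f \<Longrightarrow> F \<subseteq> F' \<Longrightarrow> rf1 F' f"
  unfolding rf1_def by blast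

lemma rf1_const: "rf1 F (\<lambda>y. c)"
  unfolding rf1_def by (rule exI[of _ "[:c:]"], rule exI[of _ 1]) simp

lemma rf1_add: "rf1 F f \<Longrightarrow> rf1 F g \<Longrightarrow> rf1 F (\<lambda>y. f y + g y)"
proof -
  assume "rf1 F f" "rf1 F g"
  then obtain p q p' q' where a: "\<forall>y. y \<notin> F \<longrightarrow> poly q y \<noteq> 0 \<and> f y = poly p y / poly q y"
    and b: "\<forall>y. y \<notin> F \<longrightarrow> poly q' y \<noteq> 0 \<and> g y = poly p' y / poly q' y" unfolding rf1_def by blast
  show ?thesis unfolding rf1_def
    by (rule exI[of _ "p * q' + p' * q"], rule exI[of _ "q * q'"]) (use a b in \<open>auto simp: field_simps\<close>)
qed

lemma rf1_mult: "rf1 F f \<Longrightarrow> rf1 F g \<Longrightarrow> rf1 F (\<lambda>y. f y * g y)"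
proof -
  assume "rf1 F f" "rf1 F g"
  then obtain p q p' q' where a: "\<forall>y. y \<notin> F \<longrightarrow> poly q y \<noteq> 0 \<and> f y = poly p y / poly q y"
    and b: "\<forall>y. y \<notin> F \<longrightarrow> poly q' y \<noteq> 0 \<and> g y = poly p' y / poly q' y" unfolding rf1_def by blast
  show ?thesis unfolding rf1_def
    by (rule exI[of _ "p * p'"], rule exI[of _ "q * q'"]) (use a b in \<open>auto simp: field_simps\<close>)
qed

lemma rf1_sum: "finite A \<Longrightarrow> (\<And>a. a \<in> A \<Longrightarrow> rf1 F (f a)) \<Longrightarrow> rf1 F (\<lambda>y. \<Sum>a\<in>A. f a y)"
proof (induction A rule: finite_induct)
  case empty then show ?case using rf1_const[of F 0] by simp
next
  case (insert a A) then show ?case using rf1_add[of F "f a" "\<lambda>y. \<Sum>a\<in>A. f a y"] by simp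
qed

lemma rf1_cong: "rf1 F f \<Longrightarrow> (\<forall>y. y \<notin> F' \<longrightarrow> f y = g y) \<Longrightarrow> rf1 (F \<union> F') g"
  unfolding rf1_def by (metis UnI1 UnI2)

lemma rational_rf1: "rational_fun f \<Longrightarrow> \<exists>F. finite F \<and> rf1 F f"
proof -
  assume "rational_fun f"
  then obtain p q where q: "q \<noteq> 0" and h: "\<forall>x. poly q x \<noteq> 0 \<longrightarrow> f x = poly p x / poly q x"
    unfolding rational_fun_def by blast
  have "finite {y. poly q y = 0}" using poly_roots_finite[OF q] .
  moreover have "rf1 {y. poly q y = 0} f" unfolding rf1_def using h by blast
  ultimately show ?thesis by blast
qed

lemma finite_choice_mono:
  assumes "finite I" "\<forall>i\<in>I. \<exists>F. finite F \<and> P i F" "\<And>i F F'. P i F \<Longrightarrow> F \<subseteq> F' \<Longrightarrow> P i F'"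
  shows "\<exists>F. finite F \<and> (\<forall>i\<in>I. P i F)"
proof -
  obtain G where G: "\<forall>i\<in>I. finite (G i) \<and> P i (G i)" using bchoice[OF assms(2)] by blast
  have "finite (\<Union>i\<in>I. G i)" using G assms(1) by blast
  moreover have "\<forall>i\<in>I. P i (\<Union>i\<in>I. G i)" using G assms(3) by blast
  ultimately show ?thesis by blast
qed

definition rf1M :: "complex set \<Rightarrow> (complex \<Rightarrow> 'r::finite cmat) \<Rightarrow> bool" where
  "rf1M F A \<longleftrightarrow> (\<forall>a b. rf1 F (\<lambda>y. A y $ a $ b))"

lemma rf1M_mono: "rf1M F A \<Longrightarrow> F \<subseteq> F' \<Longrightarrow> rf1M F' A"
  unfolding rf1M_def using rf1_mono by blast

lemma rf1M_mult: "rf1M F A \<Longrightarrow> rf1M F B \<Longrightarrow> rf1M F (\<lambda>y. A y ** B y)"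
  unfolding rf1M_def matrix_matrix_mult_def
  by (auto intro!: rf1_sum rf1_mult)

lemma rf1M_const: "rf1M F (\<lambda>y. C)"
  unfolding rf1M_def using rf1_const by blast

lemma rational_rf1M: "rational_mat (A :: complex \<Rightarrow> 'r::finite cmat) \<Longrightarrow> \<exists>F. finite F \<and> rf1M F A"
proof -
  assume a: "rational_mat A"
  have fin: "finite (UNIV :: ('r \<times> 'r) set)" by simp
  have "\<forall>ab\<in>UNIV. \<exists>F. finite F \<and> rf1 F (\<lambda>y. A y $ fst ab $ snd ab)"
    using a rational_rf1 unfolding rational_mat_def by blast
  then have "\<exists>F. finite F \<and> (\<forall>ab\<in>UNIV. rf1 F (\<lambda>y. A y $ fst ab $ snd ab))"
    by (rule finite_choice_mono[OF fin]) (erule rf1_mono, assumption)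
  then show ?thesis unfolding rf1M_def by auto
qed

lemma rf1M_cong: "rf1M F A \<Longrightarrow> (\<forall>y. y \<notin> F' \<longrightarrow> A y = B y) \<Longrightarrow> rf1M (F \<union> F') B"
  unfolding rf1M_def by (intro allI rf1_cong) auto

fun Sprod :: "(int \<Rightarrow> complex \<Rightarrow> 'r::finite cmat) \<Rightarrow> int \<Rightarrow> nat \<Rightarrow> complex \<Rightarrow> 'r cmat" where
  "Sprod S N 0 x = mat 1"
| "Sprod S N (Suc k) x = Sprod S N k x ** S (N + int k) x"

lemma inv_unique:
  fixes A B :: "complex^'n::finite^'n"
  assumes "A ** B = mat 1"
  shows "matrix_inv A = B \<and> invertible A"
proof -
  have BA: "B ** A = mat 1" using assms matrix_left_right_inverse by blast
  have ex: "\<exists>A'. A ** A' = mat 1 \<and> A' ** A = mat 1" using assms BA by blast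
  then have C: "A ** matrix_inv A = mat 1 \<and> matrix_inv A ** A = mat 1"
    unfolding matrix_inv_def by (rule someI_ex)
  have "matrix_inv A = matrix_inv A ** (A ** B)" using assms by simp
  also have "\<dots> = B" using C by (simp add: matrix_mul_assoc)
  finally show ?thesis using ex invertible_def by blast
qed

lemma Rprod_inv:
  assumes R_rat: "\<forall>m. rational_mat (R m)"
    and S_rat: "\<forall>m. rational_mat (S m)"
    and RS: "\<forall>m. finite {x. R m x ** S m x \<noteq> mat 1}"
  shows "\<exists>F. finite F \<and> rf1M F (Rprod R N k) \<and> rf1M F (\<lambda>y. matrix_inv (Rprod R N k y)) \<and>
      (\<forall>y. y \<notin> F \<longrightarrow> invertible (Rprod R N k y) \<and> matrix_inv (Rprod R N k y) = Sprod S N k y)"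
proof -
  have "\<exists>F. finite F \<and> rf1M F (Rprod R N k) \<and> rf1M F (Sprod S N k) \<and>
      (\<forall>y. y \<notin> F \<longrightarrow> Rprod R N k y ** Sprod S N k y = mat 1)"
  proof (induction k)
    case 0 then show ?case by (intro exI[of _ "{}"]) (simp add: rf1M_const)
  next
    case (Suc k)
    then obtain F where F: "finite F" "rf1M F (Rprod R N k)" "rf1M F (Sprod S N k)"
      "\<forall>y. y \<notin> F \<longrightarrow> Rprod R N k y ** Sprod S N k y = mat 1" by blast
    obtain F1 where F1: "finite F1" "rf1M F1 (R (N + int k))" using rational_rf1M R_rat by blast
    obtain F2 where F2: "finite F2" "rf1M F2 (S (N + int k))" using rational_rf1M S_rat by blast
    define F3 where "F3 = {x. R (N + int k) x ** S (N + int k) x \<noteq> mat 1}"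
    define G where "G = F \<union> F1 \<union> F2 \<union> F3"
    have fG: "finite G" unfolding G_def F3_def using F F1 F2 RS by blast
    have e1: "Rprod R N (Suc k) = (\<lambda>y. R (N + int k) y ** Rprod R N k y)" by (rule ext) simp
    have e2: "Sprod S N (Suc k) = (\<lambda>y. Sprod S N k y ** S (N + int k) y)" by (rule ext) simp
    have sub: "F \<subseteq> G" "F1 \<subseteq> G" "F2 \<subseteq> G" unfolding G_def by auto
    have "rf1M G (Rprod R N (Suc k))"
      unfolding e1 by (rule rf1M_mult[OF rf1M_mono[OF F1(2) sub(2)] rf1M_mono[OF F(2) sub(1)]])
    moreover have "rf1M G (Sprod S N (Suc k))"
      unfolding e2 by (rule rf1M_mult[OF rf1M_mono[OF F(3) sub(1)] rf1M_mono[OF F2(2) sub(3)]])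
    moreover have "\<forall>y. y \<notin> G \<longrightarrow> Rprod R N (Suc k) y ** Sprod S N (Suc k) y = mat 1"
    proof (intro allI impI)
      fix y assume y: "y \<notin> G"
      have "Rprod R N (Suc k) y ** Sprod S N (Suc k) y =
          R (N + int k) y ** (Rprod R N k y ** Sprod S N k y) ** S (N + int k) y"
        by (simp add: matrix_mul_assoc)
      also have "\<dots> = mat 1" using y F(4) unfolding G_def F3_def by simp
      finally show "Rprod R N (Suc k) y ** Sprod S N (Suc k) y = mat 1" .
    qed
    ultimately show ?case using fG by blast
  qed
  then obtain F where F: "finite F" "rf1M F (Rprod R N k)" "rf1M F (Sprod S N k)"
      "\<forall>y. y \<notin> F \<longrightarrow> Rprod R N k y ** Sprod S N k y = mat 1" by blast
  have iv: "\<forall>y. y \<notin> F \<longrightarrow> invertible (Rprod R N k y) \<and> matrix_inv (Rprod R N k y) = Sprod S N k y"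
    using F(4) inv_unique by blast
  have "rf1M (F \<union> F) (\<lambda>y. matrix_inv (Rprod R N k y))"
    by (rule rf1M_cong[OF F(3)]) (use iv in simp)
  then show ?thesis using F iv by auto
qed



definition goodx :: "nat \<Rightarrow> complex set \<Rightarrow> (nat \<Rightarrow> complex) \<Rightarrow> bool" where
  "goodx n S x \<longleftrightarrow> (\<forall>i<n. \<forall>j<n. i \<noteq> j \<longrightarrow> x i \<noteq> x j) \<and> (\<forall>i<n. x i \<notin> S)"

definition ratG :: "nat \<Rightarrow> complex set \<Rightarrow> ((nat \<Rightarrow> complex) \<Rightarrow> complex) \<Rightarrow> bool" where
  "ratG n S f \<longleftrightarrow> (\<exists>p\<in>polyfun n. \<exists>q\<in>polyfun n. \<forall>x. goodx n S x \<longrightarrow> q x \<noteq> 0 \<and> f x = p x / q x)"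

lemma ratG_intro: "p \<in> polyfun n \<Longrightarrow> q \<in> polyfun n \<Longrightarrow> (\<And>x. goodx n S x \<Longrightarrow> q x \<noteq> 0 \<and> f x = p x / q x) \<Longrightarrow> ratG n S f"
  unfolding ratG_def by blast

lemma ratG_const: "ratG n S (\<lambda>x. c)"
  by (rule ratG_intro[OF polyfun.pconst[of c n] polyfun.pconst[of 1 n]]) simp

lemma ratG_add: "ratG n S f \<Longrightarrow> ratG n S g \<Longrightarrow> ratG n S (\<lambda>x. f x + g x)"
proof -
  assume "ratG n S f" "ratG n S g"
  then obtain p q p' q' where pq: "p \<in> polyfun n" "q \<in> polyfun n" "p' \<in> polyfun n" "q' \<in> polyfun n"
    and a: "\<forall>x. goodx n S x \<longrightarrow> q x \<noteq> 0 \<and> f x = p x / q x"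
    and b: "\<forall>x. goodx n S x \<longrightarrow> q' x \<noteq> 0 \<and> g x = p' x / q' x" unfolding ratG_def by blast
  have "(\<lambda>x. p x * q' x + p' x * q x) \<in> polyfun n" using pq by (intro polyfun.padd polyfun.pmult)
  moreover have "(\<lambda>x. q x * q' x) \<in> polyfun n" using pq by (intro polyfun.pmult)
  moreover have "\<And>x. goodx n S x \<Longrightarrow> q x * q' x \<noteq> 0 \<and> f x + g x = (p x * q' x + p' x * q x) / (q x * q' x)"
    using a b by (auto simp: field_simps)
  ultimately show ?thesis by (rule ratG_intro)
qed

lemma ratG_mult: "ratG n S f \<Longrightarrow> ratG n S g \<Longrightarrow> ratG n S (\<lambda>x. f x * g x)"
proof -
  assume "ratG n S f" "ratG n S g"
  then obtain p q p' q' where pq: "p \<in> polyfun n" "q \<in> polyfun n" "p' \<in> polyfun n" "q' \<in> polyfun n"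
    and a: "\<forall>x. goodx n S x \<longrightarrow> q x \<noteq> 0 \<and> f x = p x / q x"
    and b: "\<forall>x. goodx n S x \<longrightarrow> q' x \<noteq> 0 \<and> g x = p' x / q' x" unfolding ratG_def by blast
  have "(\<lambda>x. p x * p' x) \<in> polyfun n" using pq by (intro polyfun.pmult)
  moreover have "(\<lambda>x. q x * q' x) \<in> polyfun n" using pq by (intro polyfun.pmult)
  moreover have "\<And>x. goodx n S x \<Longrightarrow> q x * q' x \<noteq> 0 \<and> f x * g x = (p x * p' x) / (q x * q' x)"
    using a b by (auto simp: field_simps)
  ultimately show ?thesis by (rule ratG_intro)
qed

lemma ratG_div: "ratG n S f \<Longrightarrow> D \<in> polyfun n \<Longrightarrow> (\<forall>x. goodx n S x \<longrightarrow> D x \<noteq> 0) \<Longrightarrow> ratG n S (\<lambda>x. f x / D x)"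
proof -
  assume "ratG n S f" and D: "D \<in> polyfun n" and Dn: "\<forall>x. goodx n S x \<longrightarrow> D x \<noteq> 0"
  then obtain p q where pq: "p \<in> polyfun n" "q \<in> polyfun n"
    and a: "\<forall>x. goodx n S x \<longrightarrow> q x \<noteq> 0 \<and> f x = p x / q x" unfolding ratG_def by blast
  have "(\<lambda>x. q x * D x) \<in> polyfun n" using pq D by (intro polyfun.pmult)
  moreover have "\<And>x. goodx n S x \<Longrightarrow> q x * D x \<noteq> 0 \<and> f x / D x = p x / (q x * D x)"
    using a Dn by (auto simp: field_simps)
  ultimately show ?thesis using pq(1) by (intro ratG_intro)
qed

lemma ratG_sum: "finite A \<Longrightarrow> (\<And>a. a \<in> A \<Longrightarrow> ratG n S (f a)) \<Longrightarrow> ratG n S (\<lambda>x. \<Sum>a\<in>A. f a x)"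
proof (induction A rule: finite_induct)
  case empty then show ?case using ratG_const[of n S 0] by simp
next
  case (insert a A) then show ?case using ratG_add[of n S "f a" "\<lambda>x. \<Sum>a\<in>A. f a x"] by simp
qed

lemma poly_polyfun: "i < n \<Longrightarrow> (\<lambda>x. poly p (x i)) \<in> polyfun n"
proof (induction p)
  case 0 then show ?case using polyfun.pconst[of 0 n] by simp
next
  case (pCons a p)
  have "(\<lambda>x. a + x i * poly p (x i)) \<in> polyfun n"
    using pCons polyfun.pconst polyfun.pvar by (intro polyfun.padd polyfun.pmult) auto
  then show ?case by simp
qed

lemma ratG_rf1: "rf1 F f \<Longrightarrow> F \<subseteq> S \<Longrightarrow> i < n \<Longrightarrow> ratG n S (\<lambda>x. f (x i))"
proof -
  assume "rf1 F f" "F \<subseteq> S" "i < n"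
  then obtain p q where a: "\<forall>y. y \<notin> F \<longrightarrow> poly q y \<noteq> 0 \<and> f y = poly p y / poly q y"
    unfolding rf1_def by blast
  have "\<And>x. goodx n S x \<Longrightarrow> poly q (x i) \<noteq> 0 \<and> f (x i) = poly p (x i) / poly q (x i)"
    using a \<open>F \<subseteq> S\<close> \<open>i < n\<close> unfolding goodx_def by blast
  then show ?thesis by (intro ratG_intro[OF poly_polyfun[OF \<open>i < n\<close>] poly_polyfun[OF \<open>i < n\<close>]])
qed

definition ratM :: "nat \<Rightarrow> complex set \<Rightarrow> ((nat \<Rightarrow> complex) \<Rightarrow> 'r::finite cmat) \<Rightarrow> bool" where
  "ratM n S A \<longleftrightarrow> (\<forall>a b. ratG n S (\<lambda>x. A x $ a $ b))"

lemma ratM_mult: "ratM n S A \<Longrightarrow> ratM n S B \<Longrightarrow> ratM n S (\<lambda>x. A x ** B x)"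
  unfolding ratM_def matrix_matrix_mult_def
  by (auto intro!: ratG_sum ratG_mult)

lemma ratM_const: "ratM n S (\<lambda>x. C)"
  unfolding ratM_def using ratG_const by blast

lemma ratM_rf1M: "rf1M F A \<Longrightarrow> F \<subseteq> S \<Longrightarrow> i < n \<Longrightarrow> ratM n S (\<lambda>x. A (x i))"
  unfolding ratM_def rf1M_def using ratG_rf1 by blast

lemma ratG_trace: "ratM n S A \<Longrightarrow> ratG n S (\<lambda>x. trace (A x))"
  unfolding ratM_def trace_def by (auto intro!: ratG_sum)

lemma ratM_mprod: "(\<forall>i\<in>set L. ratM n S (MM i)) \<Longrightarrow> ratM n S (\<lambda>x. mprod_list (map (\<lambda>i. MM i x) L))"
proof (induction L)
  case Nil then show ?case by (simp add: mprod_list_def ratM_const)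
next
  case (Cons a L)
  then have "ratM n S (\<lambda>x. MM a x ** mprod_list (map (\<lambda>i. MM i x) L))"
    by (intro ratM_mult) auto
  then show ?case by (simp add: mprod_cons)
qed

lemma polyfun_diff: "i < n \<Longrightarrow> j < n \<Longrightarrow> (\<lambda>x. x i - x j) \<in> polyfun n"
  using polyfun.padd[OF polyfun.pvar polyfun_neg[OF polyfun.pvar]] by simp

lemma Q0_rat:
  assumes "\<forall>i<n. ratM n S (MM i)"
  shows "ratG n S (\<lambda>x. Q0 n x (\<lambda>i. MM i x))"
proof -
  have fin: "finite {\<sigma>. is_ncycle n \<sigma>}"
  proof (rule finite_subset[OF _ finite_permutations[of "{..<n}"]])
    show "{\<sigma>. is_ncycle n \<sigma>} \<subseteq> {p. p permutes {..<n}}" unfolding is_ncycle_def by blast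
  qed simp
  have trm: "ratG n S (\<lambda>x. of_int (sign \<sigma>) * trace (mprod_list (map (\<lambda>i. MM ((\<sigma> ^^ i) 0) x) [1..<n+1]))
      / (\<Prod>i<n. (x i - x (\<sigma> i))))" if s: "is_ncycle n \<sigma>" for \<sigma>
  proof -
    have lt: "(\<sigma> ^^ i) 0 < n" for i using s unfolding is_ncycle_def by blast
    have perm: "\<sigma> permutes {..<n}" using s unfolding is_ncycle_def by blast
    have sl: "\<sigma> i < n" if "i < n" for i using permutes_in_image[OF perm] that by simp
    have L: "ratM n S (\<lambda>x. mprod_list (map (\<lambda>j. MM j x) (map (\<lambda>i. (\<sigma> ^^ i) 0) [1..<n+1])))"
      by (rule ratM_mprod) (use assms lt in auto)
    have T: "ratG n S (\<lambda>x. of_int (sign \<sigma>) * trace (mprod_list (map (\<lambda>i. MM ((\<sigma> ^^ i) 0) x) [1..<n+1])))"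
      using ratG_mult[OF ratG_const ratG_trace[OF L]] by (simp add: o_def)
    show ?thesis
    proof (cases "\<forall>i<n. \<sigma> i \<noteq> i")
      case True
      have "(\<lambda>x. \<Prod>i<n. (x i - x (\<sigma> i))) \<in> polyfun n"
        by (rule polyfun_prod) (use polyfun_diff sl in auto)
      moreover have "\<forall>x. goodx n S x \<longrightarrow> (\<Prod>i<n. (x i - x (\<sigma> i))) \<noteq> 0"
        using True sl unfolding goodx_def by auto
      ultimately show ?thesis using ratG_div[OF T] by blast
    next
      case False
      then obtain i where i: "i < n" "\<sigma> i = i" by blast
      have z: "(\<Prod>i<n. (x i - x (\<sigma> i))) = 0" for x :: "nat \<Rightarrow> complex"
        using i by (subst prod_zero_iff) (auto intro!: bexI[of _ i])
      have "(\<lambda>x. of_int (sign \<sigma>) * trace (mprod_list (map (\<lambda>i. MM ((\<sigma> ^^ i) 0) x) [1..<n+1]))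
      / (\<Prod>i<n. (x i - x (\<sigma> i)))) = (\<lambda>x. 0)"
        by (simp only: z division_ring_divide_zero)
      then show ?thesis using ratG_const[of n S 0] by simp
    qed
  qed
  show ?thesis unfolding Q0_def by (rule ratG_sum[OF fin]) (use trm in auto)
qed



lemma vs_cscale: "vector_space (cscale :: complex \<Rightarrow> 'r::finite cmat \<Rightarrow> 'r cmat)"
  unfolding vector_space_def cscale_def by (auto simp: vec_eq_iff algebra_simps)

lemma module_cscale: "module (cscale :: complex \<Rightarrow> 'r::finite cmat \<Rightarrow> 'r cmat)"
  using vs_cscale module_iff_vector_space by blast

definition munit :: "'r::finite \<Rightarrow> 'r \<Rightarrow> 'r cmat" where
  "munit a b = (\<chi> i j. if i = a \<and> j = b then 1 else 0)"

lemma span_munit: "(A :: 'r::finite cmat) \<in> module.span cscale (range (\<lambda>ab. munit (fst ab) (snd ab)))"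
proof -
  have e: "A = (\<Sum>ab\<in>UNIV. cscale (A $ fst ab $ snd ab) (munit (fst ab) (snd ab)))"
  proof -
    have "(\<Sum>ab\<in>UNIV. cscale (A $ fst ab $ snd ab) (munit (fst ab) (snd ab))) $ i $ j = A $ i $ j" for i j
    proof -
      have "(\<Sum>ab\<in>UNIV. cscale (A $ fst ab $ snd ab) (munit (fst ab) (snd ab))) $ i $ j
          = (\<Sum>ab\<in>UNIV. A $ fst ab $ snd ab * (if i = fst ab \<and> j = snd ab then 1 else 0))"
        by (simp add: sum_component cscale_def munit_def)
      also have "\<dots> = (\<Sum>ab\<in>{(i, j)}. A $ fst ab $ snd ab * (if i = fst ab \<and> j = snd ab then 1 else 0))"
        by (rule sum.mono_neutral_right) auto
      finally show ?thesis by simp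
    qed
    then show ?thesis by (simp add: vec_eq_iff)
  qed
  show ?thesis
    by (subst e, rule module.span_sum[OF module_cscale], rule module.span_scale[OF module_cscale],
        rule module.span_base[OF module_cscale]) auto
qed

lemma basis_g:
  fixes g :: "'r::finite cmat set"
  shows "\<exists>B. finite B \<and> B \<subseteq> g \<and> card B = cdim g \<and> (\<forall>M\<in>g. \<exists>u. M = (\<Sum>v\<in>B. cscale (u v) v))"
proof -
  obtain B where B: "B \<subseteq> g" "\<not> module.dependent cscale B" "g \<subseteq> module.span cscale B"
    "card B = vector_space.dim cscale g"
    using vector_space.basis_exists[OF vs_cscale, of g] by blast
  have fin: "finite B"
    using vector_space.independent_span_bound[OF vs_cscale, of "range (\<lambda>ab. munit (fst ab) (snd ab))" B] B(2) span_munit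
    by auto
  have "\<forall>M\<in>g. \<exists>u. M = (\<Sum>v\<in>B. cscale (u v) v)"
    using B(3) module.span_finite[OF module_cscale fin] by blast
  then show ?thesis using fin B unfolding cdim_def by blast
qed



lemma inv_props: "invertible (A::complex^'n::finite^'n) \<Longrightarrow> A ** matrix_inv A = mat 1 \<and> matrix_inv A ** A = mat 1"
  unfolding invertible_def matrix_inv_def by (rule someI_ex)

lemma Psi_Rprod:
  assumes Psi_R: "\<forall>m. \<forall>x\<in>U m \<inter> U (m + 1). \<Psi> (m + 1) x = R m x ** \<Psi> m x"
  shows "(\<forall>j\<le>k. y \<in> U (N + int j)) \<Longrightarrow> \<Psi> (N + int k) y = Rprod R N k y ** (\<Psi> N y :: 'r::finite cmat)"
proof (induction k)
  case 0 then show ?case by simp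
next
  case (Suc k)
  have e: "N + int (Suc k) = N + int k + 1" by simp
  have y1: "y \<in> U (N + int k)" using Suc.prems by simp
  have y2': "y \<in> U (N + int (Suc k))" using Suc.prems by blast
  have y2: "y \<in> U (N + int k + 1)" using y2' unfolding e .
  have "\<Psi> (N + int (Suc k)) y = \<Psi> (N + int k + 1) y" unfolding e ..
  also have "\<dots> = R (N + int k) y ** \<Psi> (N + int k) y" using Psi_R y1 y2 by blast
  also have "\<dots> = R (N + int k) y ** (Rprod R N k y ** \<Psi> N y)" using Suc.IH Suc.prems by simp
  also have "\<dots> = Rprod R N (Suc k) y ** \<Psi> N y" by (simp add: matrix_mul_assoc)
  finally show ?case .
qed

theorem mainTheorem9:
  fixes G :: "'r::finite cmat set" and g :: "'r cmat set"
    and D R \<Psi> :: "int \<Rightarrow> complex \<Rightarrow> 'r cmat"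
    and U :: "int \<Rightarrow> complex set"
    and N :: int and n :: nat
  assumes n2: "n \<ge> 2"
    and g_red: "reductive_lie_algebra g"
    and G_inv: "\<forall>A\<in>G. invertible A"
    and G_Ad: "\<forall>A\<in>G. \<forall>X\<in>g. A ** X ** matrix_inv A \<in> g"
    and U_open: "\<forall>m. open (U m)"
    and D_rat: "\<forall>m. rational_mat (D m)"
    and D_g: "\<forall>m. \<forall>x\<in>U m. D m x \<in> g"
    and Psi_G: "\<forall>m. \<forall>x\<in>U m. \<Psi> m x \<in> G \<and> invertible (\<Psi> m x)"
    and Psi_ode: "\<forall>m. \<forall>x\<in>U m. \<forall>i j.
        ((\<lambda>y. \<Psi> m y $ i $ j) has_field_derivative (D m x ** \<Psi> m x) $ i $ j) (at x)"
    and R_rat: "\<forall>m. rational_mat (R m) \<and>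
        (\<exists>S. rational_mat S \<and> finite {x. R m x ** S x \<noteq> mat 1})"
    and Psi_R: "\<forall>m. \<forall>x\<in>U m \<inter> U (m + 1). \<Psi> (m + 1) x = R m x ** \<Psi> m x"
  shows "\<exists>\<alpha> :: nat \<Rightarrow> (nat \<Rightarrow> complex) \<Rightarrow> complex.
     (\<forall>k\<le>cdim g ^ n. \<alpha> k \<in> polyfun n) \<and>
     (\<exists>k\<le>cdim g ^ n. \<exists>x. \<alpha> k x \<noteq> 0) \<and>
     (\<exists>S::complex set. finite S \<and>
        (\<forall>x M. (\<forall>i<n. \<forall>j<n. i \<noteq> j \<longrightarrow> x i \<noteq> x j) \<and> (\<forall>i<n. x i \<notin> S) \<and> (\<forall>i<n. M i \<in> g)
            \<longrightarrow> (\<Sum>k\<le>cdim g ^ n. \<alpha> k x * Qtilde R N k n x M) = 0) \<and>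
        (\<forall>x E. (\<forall>i<n. \<forall>j<n. i \<noteq> j \<longrightarrow> x i \<noteq> x j) \<and> (\<forall>i<n. x i \<notin> S)
               \<and> (\<forall>i<n. \<forall>k\<le>cdim g ^ n. x i \<in> U (N + int k)) \<and> (\<forall>i<n. E i \<in> g)
            \<longrightarrow> (\<Sum>k\<le>cdim g ^ n. \<alpha> k x * Wn \<Psi> (N + int k) n x E) = 0))"
proof -
  define d where "d = cdim g"
  define K where "K = d ^ n"
  obtain B where B: "finite B" "B \<subseteq> g" "card B = d" "\<forall>M\<in>g. \<exists>u. M = (\<Sum>v\<in>B. cscale (u v) v)"
    using basis_g[of g] unfolding d_def by blast
  have "\<forall>m. \<exists>S. rational_mat S \<and> finite {x. R m x ** S x \<noteq> mat 1}" using R_rat by blast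
  then obtain Sf where Sf: "\<forall>m. rational_mat (Sf m) \<and> finite {x. R m x ** Sf m x \<noteq> mat 1}"
    by (metis choice)
  have Rr: "\<forall>m. rational_mat (R m)" using R_rat by blast
  have Sr: "\<forall>m. rational_mat (Sf m)" using Sf by blast
  have RS: "\<forall>m. finite {x. R m x ** Sf m x \<noteq> mat 1}" using Sf by blast
  define P where "P k F \<longleftrightarrow> rf1M F (Rprod R N k) \<and> rf1M F (\<lambda>y. matrix_inv (Rprod R N k y)) \<and>
      (\<forall>y. y \<notin> F \<longrightarrow> invertible (Rprod R N k y))" for k F
  have ex: "\<forall>k\<in>{..K}. \<exists>F. finite F \<and> P k F"
  proof
    fix k
    obtain F where "finite F" "rf1M F (Rprod R N k)" "rf1M F (\<lambda>y. matrix_inv (Rprod R N k y))"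
      "\<forall>y. y \<notin> F \<longrightarrow> invertible (Rprod R N k y) \<and> matrix_inv (Rprod R N k y) = Sprod Sf N k y"
      using Rprod_inv[OF Rr Sr RS, of N k] by blast
    then show "\<exists>F. finite F \<and> P k F" unfolding P_def by blast
  qed
  have "\<exists>F. finite F \<and> (\<forall>k\<in>{..K}. P k F)"
  proof (rule finite_choice_mono[OF finite_atMost ex])
    fix k F F' assume "P k F" "F \<subseteq> F'"
    then show "P k F'" unfolding P_def using rf1M_mono by blast
  qed
  then obtain S where S: "finite S" "\<forall>k\<in>{..K}. P k S" by blast
  define I where "I = PiE {..<n} (\<lambda>_. B)"
  define J where "J = {..K}"
  define QT where "QT k t x = Qtilde R N k n x t" for k t x
  have rat: "ratG n S (QT k t)" if "k \<in> J" for k t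
  proof -
    have PS: "P k S" using S that J_def by blast
    have r1: "rf1M S (Rprod R N k)" and r2: "rf1M S (\<lambda>y. matrix_inv (Rprod R N k y))"
      using PS unfolding P_def by auto
    have "ratM n S (\<lambda>x. Rprod R N k (x i) ** t i ** matrix_inv (Rprod R N k (x i)))" if i: "i < n" for i
    proof -
      have a1: "ratM n S (\<lambda>x. Rprod R N k (x i))" using ratM_rf1M[OF r1 order_refl i] .
      have a2: "ratM n S (\<lambda>x. matrix_inv (Rprod R N k (x i)))" using ratM_rf1M[OF r2 order_refl i] by simp
      show ?thesis by (rule ratM_mult[OF ratM_mult[OF a1 ratM_const] a2])
    qed
    then have "ratG n S (\<lambda>x. Q0 n x (\<lambda>i. Rprod R N k (x i) ** t i ** matrix_inv (Rprod R N k (x i))))"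
      using Q0_rat[of n S "\<lambda>i x. Rprod R N k (x i) ** t i ** matrix_inv (Rprod R N k (x i))"] by simp
    then show ?thesis unfolding QT_def Qtilde_def by simp
  qed
  have "\<forall>tk\<in>I \<times> J. \<exists>pq. fst pq \<in> polyfun n \<and> snd pq \<in> polyfun n \<and>
      (\<forall>x. goodx n S x \<longrightarrow> snd pq x \<noteq> 0 \<and> QT (snd tk) (fst tk) x = fst pq x / snd pq x)"
  proof
    fix tk assume "tk \<in> I \<times> J"
    then have "ratG n S (QT (snd tk) (fst tk))" using rat by auto
    then obtain p q where "p \<in> polyfun n" "q \<in> polyfun n" "\<forall>x. goodx n S x \<longrightarrow> q x \<noteq> 0 \<and> QT (snd tk) (fst tk) x = p x / q x"
      unfolding ratG_def by blast
    then show "\<exists>pq. fst pq \<in> polyfun n \<and> snd pq \<in> polyfun n \<and>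
      (\<forall>x. goodx n S x \<longrightarrow> snd pq x \<noteq> 0 \<and> QT (snd tk) (fst tk) x = fst pq x / snd pq x)"
      by (intro exI[of _ "(p, q)"]) simp
  qed
  from bchoice[OF this] obtain f where f: "\<forall>tk\<in>I \<times> J. fst (f tk) \<in> polyfun n \<and> snd (f tk) \<in> polyfun n \<and>
      (\<forall>x. goodx n S x \<longrightarrow> snd (f tk) x \<noteq> 0 \<and> QT (snd tk) (fst tk) x = fst (f tk) x / snd (f tk) x)"
    by blast
  define p where "p t k = fst (f (t, k))" for t k
  define q where "q t k = snd (f (t, k))" for t k
  have pq: "p t k \<in> polyfun n \<and> q t k \<in> polyfun n \<and> (\<forall>x. goodx n S x \<longrightarrow> q t k x \<noteq> 0 \<and> QT k t x = p t k x / q t k x)"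
    if "t \<in> I" "k \<in> J" for t k
    using f that unfolding p_def q_def by fastforce
  define A where "A t k = (\<lambda>x. p t k x * (\<Prod>k'\<in>J - {k}. q t k' x))" for t k
  have Apoly: "\<forall>t\<in>I. \<forall>k\<in>J. A t k \<in> polyfun n"
  proof (intro ballI)
    fix t k assume t: "t \<in> I" and k: "k \<in> J"
    have "(\<lambda>x. \<Prod>k'\<in>J - {k}. q t k' x) \<in> polyfun n"
      by (rule polyfun_prod) (use pq t J_def in auto)
    then show "A t k \<in> polyfun n" unfolding A_def using pq[OF t k] by (intro polyfun.pmult) auto
  qed
  have finI: "finite I" unfolding I_def using B(1) by (simp add: finite_PiE)
  have cardI: "card I = K" unfolding I_def K_def using B(1,3) by (simp add: card_PiE)
  have cardJ: "card J = Suc K" by (simp add: J_def)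
  obtain \<alpha> where a1: "\<forall>j\<in>J. \<alpha> j \<in> polyfun n" and a2: "\<exists>j\<in>J. \<exists>x. \<alpha> j x \<noteq> 0"
    and a3: "\<forall>t\<in>I. \<forall>x. (\<Sum>k\<in>J. A t k x * \<alpha> k x) = 0"
    using elim_lemma[OF finI, of J A n] cardI cardJ Apoly J_def by auto
  have basis0: "(\<Sum>k\<in>J. \<alpha> k x * QT k t x) = 0" if t: "t \<in> I" and gx: "goodx n S x" for t x
  proof -
    define Dt where "Dt = (\<Prod>k\<in>J. q t k x)"
    have Dt0: "Dt \<noteq> 0" unfolding Dt_def using pq[OF t] gx by (simp add: J_def)
    have AD: "A t k x = Dt * QT k t x" if k: "k \<in> J" for k
    proof -
      have "Dt = q t k x * (\<Prod>k'\<in>J - {k}. q t k' x)" unfolding Dt_def using k by (simp add: J_def prod.remove)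
      moreover have "q t k x \<noteq> 0 \<and> QT k t x = p t k x / q t k x" using pq[OF t k] gx by blast
      ultimately show ?thesis by (simp add: A_def field_simps)
    qed
    have "(\<Sum>k\<in>J. A t k x * \<alpha> k x) = (\<Sum>k\<in>J. Dt * (\<alpha> k x * QT k t x))"
      by (rule sum.cong) (simp_all add: AD)
    also have "\<dots> = Dt * (\<Sum>k\<in>J. \<alpha> k x * QT k t x)" by (simp add: sum_distrib_left)
    finally show ?thesis using a3 t Dt0 by simp
  qed
  define GG where "GG x M = (\<Sum>k\<in>J. \<alpha> k x * Qtilde R N k n x M)" for x M
  have conj_upd: "(\<lambda>i. Rprod R N k (x i) ** (M(j := X)) i ** matrix_inv (Rprod R N k (x i))) =
      (\<lambda>i. Rprod R N k (x i) ** M i ** matrix_inv (Rprod R N k (x i)))(j := Rprod R N k (x j) ** X ** matrix_inv (Rprod R N k (x j)))"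
    for k x M j X by (rule ext) simp
  have conj_sum: "Y ** (\<Sum>v\<in>B. cscale (u v) v) ** Z = (\<Sum>v\<in>B. cscale (u v) (Y ** v ** Z))" for Y Z :: "'r cmat" and u
    using B(1) by (simp add: sum_mult_left sum_mult_right cscale_mult_left cscale_mult_right)
  have Qt_lin: "Qtilde R N k n x (M(j := \<Sum>v\<in>B. cscale (u v) v)) = (\<Sum>v\<in>B. u v * Qtilde R N k n x (M(j := v)))"
    if "j < n" for k x M j u
    unfolding Qtilde_def conj_upd conj_sum by (rule Q0_lin[OF B(1) that])
  have G_lin: "GG x (M(j := \<Sum>v\<in>B. cscale (u v) v)) = (\<Sum>v\<in>B. u v * GG x (M(j := v)))" if "j < n" for x M j u
  proof -
    have "GG x (M(j := \<Sum>v\<in>B. cscale (u v) v)) = (\<Sum>k\<in>J. \<Sum>v\<in>B. \<alpha> k x * (u v * Qtilde R N k n x (M(j := v))))"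
      unfolding GG_def Qt_lin[OF that] by (simp add: sum_distrib_left)
    also have "\<dots> = (\<Sum>v\<in>B. \<Sum>k\<in>J. \<alpha> k x * (u v * Qtilde R N k n x (M(j := v))))" by (rule sum.swap)
    also have "\<dots> = (\<Sum>v\<in>B. u v * GG x (M(j := v)))"
      unfolding GG_def by (simp add: sum_distrib_left mult.left_commute)
    finally show ?thesis .
  qed
  have ind: "\<forall>M. (\<forall>i<j. M i \<in> g) \<and> (\<forall>i. j \<le> i \<and> i < n \<longrightarrow> M i \<in> B) \<longrightarrow> GG x M = 0"
    if gx: "goodx n S x" and jn: "j \<le> n" for x j
    using jn
  proof (induction j)
    case 0
    show ?case
    proof (intro allI impI)
      fix M assume "(\<forall>i<0. M i \<in> g) \<and> (\<forall>i. 0 \<le> i \<and> i < n \<longrightarrow> M i \<in> B)"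
      then have MB: "\<forall>i<n. M i \<in> B" by simp
      define t where "t = restrict M {..<n}"
      have tI: "t \<in> I" unfolding I_def t_def using MB by auto
      have "Qtilde R N k n x M = QT k t x" for k unfolding QT_def Qtilde_def by (rule Q0_cong) (simp add: t_def)
      then show "GG x M = 0" using basis0[OF tI gx] unfolding GG_def by simp
    qed
  next
    case (Suc j)
    show ?case
    proof (intro allI impI)
      fix M assume H: "(\<forall>i<Suc j. M i \<in> g) \<and> (\<forall>i. Suc j \<le> i \<and> i < n \<longrightarrow> M i \<in> B)"
      have jn': "j < n" using Suc.prems by simp
      have "M j \<in> g" using H by simp
      then obtain u where u: "M j = (\<Sum>v\<in>B. cscale (u v) v)" using B(4) by blast
      have "M = M(j := \<Sum>v\<in>B. cscale (u v) v)" unfolding u[symmetric] by simp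
      then have "GG x M = (\<Sum>v\<in>B. u v * GG x (M(j := v)))" using G_lin[OF jn', of x M u] by simp
      also have "\<dots> = 0"
      proof (rule sum.neutral, intro ballI)
        fix v assume v: "v \<in> B"
        have "(\<forall>i<j. (M(j := v)) i \<in> g) \<and> (\<forall>i. j \<le> i \<and> i < n \<longrightarrow> (M(j := v)) i \<in> B)"
          using H v by (auto simp: Suc_le_eq)
        then have "GG x (M(j := v)) = 0" using Suc.IH jn' by simp
        then show "u v * GG x (M(j := v)) = 0" by simp
      qed
      finally show "GG x M = 0" .
    qed
  qed
  have part1: "GG x M = 0" if gx: "goodx n S x" and Mg: "\<forall>i<n. M i \<in> g" for x M
    using ind[OF gx order_refl] Mg by auto
  show ?thesis
  proof (intro exI[of _ \<alpha>] conjI)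
    show "\<forall>k\<le>cdim g ^ n. \<alpha> k \<in> polyfun n" using a1 unfolding J_def K_def d_def by simp
    show "\<exists>k\<le>cdim g ^ n. \<exists>x. \<alpha> k x \<noteq> 0" using a2 unfolding J_def K_def d_def by auto
    show "\<exists>S::complex set. finite S \<and>
        (\<forall>x M. (\<forall>i<n. \<forall>j<n. i \<noteq> j \<longrightarrow> x i \<noteq> x j) \<and> (\<forall>i<n. x i \<notin> S) \<and> (\<forall>i<n. M i \<in> g)
            \<longrightarrow> (\<Sum>k\<le>cdim g ^ n. \<alpha> k x * Qtilde R N k n x M) = 0) \<and>
        (\<forall>x E. (\<forall>i<n. \<forall>j<n. i \<noteq> j \<longrightarrow> x i \<noteq> x j) \<and> (\<forall>i<n. x i \<notin> S)
               \<and> (\<forall>i<n. \<forall>k\<le>cdim g ^ n. x i \<in> U (N + int k)) \<and> (\<forall>i<n. E i \<in> g)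
            \<longrightarrow> (\<Sum>k\<le>cdim g ^ n. \<alpha> k x * Wn \<Psi> (N + int k) n x E) = 0)"
    proof (intro exI[of _ S] conjI allI impI)
      show "finite S" by (rule S(1))
    next
      fix x M assume H: "(\<forall>i<n. \<forall>j<n. i \<noteq> j \<longrightarrow> x i \<noteq> x j) \<and> (\<forall>i<n. x i \<notin> S) \<and> (\<forall>i<n. M i \<in> g)"
      then have gx: "goodx n S x" unfolding goodx_def by blast
      have Mg: "\<forall>i<n. M i \<in> g" using H by blast
      have "GG x M = 0" using part1[OF gx Mg] .
      then show "(\<Sum>k\<le>cdim g ^ n. \<alpha> k x * Qtilde R N k n x M) = 0" unfolding GG_def J_def K_def d_def by simp
    next
      fix x E assume H: "(\<forall>i<n. \<forall>j<n. i \<noteq> j \<longrightarrow> x i \<noteq> x j) \<and> (\<forall>i<n. x i \<notin> S)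
               \<and> (\<forall>i<n. \<forall>k\<le>cdim g ^ n. x i \<in> U (N + int k)) \<and> (\<forall>i<n. E i \<in> g)"
      then have gx: "goodx n S x" unfolding goodx_def by blast
      have HU: "\<forall>i<n. \<forall>k\<le>K. x i \<in> U (N + int k)" using H unfolding K_def d_def by blast
      have Wk: "Wn \<Psi> (N + int k) n x E = Qtilde R N k n x (\<lambda>i. Mfun \<Psi> N (x i) (E i))" if k: "k \<le> K" for k
        unfolding Wn_def Qtilde_def
      proof (rule Q0_cong, intro allI impI)
        fix i assume i: "i < n"
        define y where "y = x i"
        have Uall: "\<forall>j\<le>k. y \<in> U (N + int j)" using HU i k unfolding y_def by auto
        have psi: "\<Psi> (N + int k) y = Rprod R N k y ** \<Psi> N y" using Psi_Rprod[OF Psi_R] Uall by blast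
        have yN: "y \<in> U N" using Uall[rule_format, of 0] by simp
        have invP: "invertible (\<Psi> N y)" using Psi_G yN by blast
        have yS: "y \<notin> S" using H i unfolding y_def by blast
        have invR: "invertible (Rprod R N k y)" using S(2) k yS unfolding P_def by auto
        have iP: "\<Psi> N y ** matrix_inv (\<Psi> N y) = mat 1" using inv_props[OF invP] by blast
        have iR: "Rprod R N k y ** matrix_inv (Rprod R N k y) = mat 1" using inv_props[OF invR] by blast
        have "(Rprod R N k y ** \<Psi> N y) ** (matrix_inv (\<Psi> N y) ** matrix_inv (Rprod R N k y))
            = Rprod R N k y ** (\<Psi> N y ** matrix_inv (\<Psi> N y)) ** matrix_inv (Rprod R N k y)"
          by (simp add: matrix_mul_assoc)
        also have "\<dots> = mat 1" using iP iR by simp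
        finally have minv: "matrix_inv (Rprod R N k y ** \<Psi> N y) = matrix_inv (\<Psi> N y) ** matrix_inv (Rprod R N k y)"
          using inv_unique by blast
        show "Mfun \<Psi> (N + int k) (x i) (E i) = Rprod R N k (x i) ** Mfun \<Psi> N (x i) (E i) ** matrix_inv (Rprod R N k (x i))"
          unfolding y_def[symmetric] Mfun_def psi minv by (simp add: matrix_mul_assoc)
      qed
      have Mg: "\<forall>i<n. Mfun \<Psi> N (x i) (E i) \<in> g"
      proof (intro allI impI)
        fix i assume i: "i < n"
        have "x i \<in> U N" using HU i by (metis add.right_neutral of_nat_0 zero_le)
        then have "\<Psi> N (x i) \<in> G" using Psi_G by blast
        then show "Mfun \<Psi> N (x i) (E i) \<in> g" unfolding Mfun_def using G_Ad H i by blast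
      qed
      have "GG x (\<lambda>i. Mfun \<Psi> N (x i) (E i)) = 0" using part1[OF gx Mg] .
      then show "(\<Sum>k\<le>cdim g ^ n. \<alpha> k x * Wn \<Psi> (N + int k) n x E) = 0"
        unfolding GG_def J_def using Wk unfolding K_def d_def by simp
    qed
  qed
qed

end
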